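(* Fix $\alpha\in(0,1/2)$ and $\theta<0$ with $$\theta>\frac{-\log 2}{\Phi^{-1}(\alpha)-\Phi^{-1}(\alpha/2)}$$ (e.g. for $\alpha=0.025$ this holds for $-2.46<\theta<0$). Then Hommel's procedure $D^H_i(\mathbf p)=\mathbb I\big(p_i\le\alpha/2\ \text{or}\ \max(p_1,p_2)\le\alpha\big)$, $i=1,2$, controls the FWER in the strong sense at level $\alpha$, is marginally nominal $\alpha$, and satisfies $\Pi_1(D^H)\ge\Pi_1(D)$ for every marginally nominal $\alpha$ procedure $D$ that controls the FWER in the strong sense at level $\alpha$.
   Context: Model: $\Theta=\mathbb R^2$, $\vartheta=(\theta_1,\theta_2)$, $p_i=\Phi(\theta_i+Z_i)$ where $Z_1,Z_2$ are independent standard normal and $\Phi$ is the standard normal CDF; the $i$th null hypothesis is true ($h_i=0$) iff $\theta_i\ge0$. A procedure is a measurable $D=(D_1,D_2):[0,1]^2\to\{0,1\}^2$ ($D_i=1$: reject the $i$th null). Strong FWER control at level $\alpha$: $P_\vartheta(\text{some true null is rejected})\le\alpha$ for all $\vartheta$. Marginally nominal $\alpha$: $D_i(\mathbf p)=0$ whenever $p_i>\alpha$. Objective: $\Pi_1(D)=\tfrac12\big[P_{(\theta,0)}(D_1(\mathbf p)=1)+P_{(0,\theta)}(D_2(\mathbf p)=1)\big]$, the expected number of true discoveries when exactly one null is false, each with probability $1/2$, the false one having parameter $\theta$. *)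

theory Defs
  imports "HOL-Probability.Probability"
begin

definition std_normal_M :: "real measure" where
  "std_normal_M = density lborel std_normal_density"

definition Phi :: "real \<Rightarrow> real" where
  "Phi x = measure std_normal_M {..x}"

definition Phi_inv :: "real \<Rightarrow> real" where
  "Phi_inv a = (THE x. Phi x = a)"

definition Z_M :: "(real \<times> real) measure" where
  "Z_M = std_normal_M \<Otimes>\<^sub>M std_normal_M"

definition pvals :: "real \<Rightarrow> real \<Rightarrow> real \<times> real \<Rightarrow> real \<times> real" where
  "pvals t1 t2 z = (Phi (t1 + fst z), Phi (t2 + snd z))"

definition Pr :: "real \<Rightarrow> real \<Rightarrow> (real \<times> real \<Rightarrow> bool) \<Rightarrow> real" where
  "Pr t1 t2 E = measure Z_M {z \<in> space Z_M. E (pvals t1 t2 z)}"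

(* A procedure: D p = (D_1 p, D_2 p), True = reject; measurable on [0,1]^2 *)
definition is_procedure :: "(real \<times> real \<Rightarrow> bool \<times> bool) \<Rightarrow> bool" where
  "is_procedure D \<longleftrightarrow>
     D \<in> measurable (restrict_space borel ({0..1} \<times> {0..1})) (count_space UNIV)"

(* strong FWER control at level alpha; null i true iff theta_i >= 0 *)
definition strong_FWER :: "real \<Rightarrow> (real \<times> real \<Rightarrow> bool \<times> bool) \<Rightarrow> bool" where
  "strong_FWER \<alpha> D \<longleftrightarrow>
     (\<forall>t1 t2. Pr t1 t2 (\<lambda>p. (t1 \<ge> 0 \<and> fst (D p)) \<or> (t2 \<ge> 0 \<and> snd (D p))) \<le> \<alpha>)"

definition marg_nominal :: "real \<Rightarrow> (real \<times> real \<Rightarrow> bool \<times> bool) \<Rightarrow> bool" where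
  "marg_nominal \<alpha> D \<longleftrightarrow>
     (\<forall>p1 p2. p1 \<in> {0..1} \<and> p2 \<in> {0..1} \<longrightarrow>
        (p1 > \<alpha> \<longrightarrow> \<not> fst (D (p1, p2))) \<and> (p2 > \<alpha> \<longrightarrow> \<not> snd (D (p1, p2))))"

definition Pi1 :: "real \<Rightarrow> (real \<times> real \<Rightarrow> bool \<times> bool) \<Rightarrow> real" where
  "Pi1 \<theta> D = (Pr \<theta> 0 (\<lambda>p. fst (D p)) + Pr 0 \<theta> (\<lambda>p. snd (D p))) / 2"

definition hommel :: "real \<Rightarrow> real \<times> real \<Rightarrow> bool \<times> bool" where
  "hommel \<alpha> p =
     (fst p \<le> \<alpha> / 2 \<or> max (fst p) (snd p) \<le> \<alpha>,
      snd p \<le> \<alpha> / 2 \<or> max (fst p) (snd p) \<le> \<alpha>)"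

end

theory Submission imports Defs begin

lemma stdM_prob: "prob_space std_normal_M"
  unfolding std_normal_M_def by (rule prob_space_normal_density) simp

lemma sets_stdM[simp, measurable_cong]: "sets std_normal_M = sets borel"
  unfolding std_normal_M_def by simp

lemma space_stdM[simp]: "space std_normal_M = UNIV"
  unfolding std_normal_M_def by simp

interpretation stdM: prob_space std_normal_M by (rule stdM_prob)

lemma stdM_rd: "real_distribution std_normal_M"
  unfolding real_distribution_def real_distribution_axioms_def using stdM_prob by simp

lemma Phi_cdf: "Phi = cdf std_normal_M"
  by (simp add: Phi_def[abs_def] cdf_def)

lemma Phi_mono: "x \<le> y \<Longrightarrow> Phi x \<le> Phi y"
  unfolding Phi_cdf using finite_borel_measure.cdf_nondecreasing[OF real_distribution.finite_borel_measure_M[OF stdM_rd]] by blast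

lemma Phi_nonneg: "0 \<le> Phi x" unfolding Phi_def by simp
lemma Phi_le1: "Phi x \<le> 1" unfolding Phi_def by (simp add: stdM.prob_le_1)

lemma Phi_cont: "isCont Phi x"
proof -
  have "emeasure std_normal_M {x} = 0"
    unfolding std_normal_M_def
    by (subst emeasure_density) (auto intro!: nn_integral_null_set simp: )
  then have "measure std_normal_M {x} = 0" by (simp add: measure_def)
  then show ?thesis unfolding Phi_cdf
    using finite_borel_measure.isCont_cdf[OF real_distribution.finite_borel_measure_M[OF stdM_rd]] by blast
qed


lemma Phi_top: "(Phi \<longlongrightarrow> 1) at_top"
  unfolding Phi_cdf by (rule real_distribution.cdf_lim_at_top_prob[OF stdM_rd])
lemma Phi_bot: "(Phi \<longlongrightarrow> 0) at_bot"
  unfolding Phi_cdf by (rule finite_borel_measure.cdf_lim_at_bot[OF real_distribution.finite_borel_measure_M[OF stdM_rd]])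

lemma Phi_strict: assumes "x < y" shows "Phi x < Phi y"
proof -
  define K where "K = x\<^sup>2 + y\<^sup>2"
  define m where "m = std_normal_density (sqrt K)"
  have mpos: "0 < m" unfolding m_def by (simp add: normal_density_pos)
  have mle: "m \<le> std_normal_density t" if "t \<in> {x<..y}" for t
  proof -
    have a: "\<bar>t\<bar> \<le> max \<bar>x\<bar> \<bar>y\<bar>" using that by auto
    have "t\<^sup>2 \<le> (max \<bar>x\<bar> \<bar>y\<bar>)\<^sup>2" using a by (metis abs_ge_zero power2_abs power_mono)
    also have "\<dots> \<le> K" unfolding K_def by (cases "\<bar>x\<bar> \<le> \<bar>y\<bar>") (auto simp: max_def)
    finally have "t\<^sup>2 \<le> K" .
    then have "t\<^sup>2 \<le> (sqrt K)\<^sup>2" unfolding K_def by simp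
    then have "exp (-((sqrt K)\<^sup>2/2)) \<le> exp(-(t\<^sup>2/2))" by simp
    then show ?thesis unfolding m_def std_normal_density_def
      by (simp add: divide_right_mono)
  qed
  have "ennreal (m * (y - x)) = (\<integral>\<^sup>+ t. ennreal m * indicator {x<..y} t \<partial>lborel)"
    using assms by (subst nn_integral_cmult_indicator) (auto simp: ennreal_mult mpos less_imp_le)
  also have "\<dots> \<le> (\<integral>\<^sup>+ t. ennreal (std_normal_density t) * indicator {x<..y} t \<partial>lborel)"
    by (intro nn_integral_mono) (auto split: split_indicator intro: mle)
  also have "\<dots> = emeasure std_normal_M {x<..y}"
    unfolding std_normal_M_def by (simp add: emeasure_density)
  finally have "m * (y - x) \<le> measure std_normal_M {x<..y}"
    by (simp add: stdM.emeasure_eq_measure)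
  moreover have "0 < m * (y - x)" using mpos assms by simp
  moreover have "measure std_normal_M {x<..y} = Phi y - Phi x"
    using finite_borel_measure.cdf_diff_eq[OF real_distribution.finite_borel_measure_M[OF stdM_rd] assms]
    unfolding Phi_cdf by simp
  ultimately show ?thesis by simp
qed

lemma Phi_le_iff: "Phi x \<le> Phi y \<longleftrightarrow> x \<le> y"
  by (meson Phi_mono Phi_strict not_le)

lemma Phi_surj: assumes "0 < a" "a < 1" shows "\<exists>x. Phi x = a"
proof -
  have "\<forall>\<^sub>F x in at_bot. Phi x < a" using order_tendstoD(2)[OF Phi_bot assms(1)] .
  then obtain l where l: "\<And>x. x \<le> l \<Longrightarrow> Phi x < a" by (auto simp: eventually_at_bot_linorder)
  have "\<forall>\<^sub>F x in at_top. Phi x > a" using order_tendstoD(1)[OF Phi_top assms(2)] .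
  then obtain r where r: "\<And>x. x \<ge> r \<Longrightarrow> Phi x > a" by (auto simp: eventually_at_top_linorder)
  have "Phi (min l r) \<le> a" using l[of "min l r"] by simp
  moreover have "a \<le> Phi (max l r)" using r[of "max l r"] by simp
  moreover have "min l r \<le> max l r" by simp
  ultimately show ?thesis using IVT[of Phi "min l r" a "max l r"] Phi_cont by auto
qed

lemma Phi_inv: assumes "0 < a" "a < 1" shows "Phi (Phi_inv a) = a"
proof -
  obtain x where x: "Phi x = a" using Phi_surj assms by blast
  have "Phi_inv a = x" unfolding Phi_inv_def
  proof (rule the_equality)
    fix y assume "Phi y = a" then show "y = x" using x Phi_le_iff by (metis order_antisym order_refl)
  qed (rule x)
  then show ?thesis using x by simp
qed

interpretation Z: prob_space Z_M unfolding Z_M_def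
  by (intro prob_space_pair stdM_prob)

lemma sets_Z[simp, measurable_cong]: "sets Z_M = sets (borel :: (real \<times> real) measure)"
proof -
  have "sets Z_M = sets (borel \<Otimes>\<^sub>M (borel :: real measure))"
    unfolding Z_M_def by (rule sets_pair_measure_cong) simp_all
  then show ?thesis by (metis borel_prod)
qed

lemma space_Z[simp]: "space Z_M = UNIV"
  using sets_eq_imp_space_eq[OF sets_Z] by simp

lemma sf_stdM: "sigma_finite_measure std_normal_M" by (simp add: stdM_prob prob_space_imp_sigma_finite)

lemma measure_Z_Times: assumes "A \<in> sets borel" "B \<in> sets borel"
  shows "measure Z_M (A \<times> B) = measure std_normal_M A * measure std_normal_M B"
proof -
  show ?thesis unfolding Z_M_def using assms
    by (simp add: sigma_finite_measure.emeasure_pair_measure_Times[OF sf_stdM] measure_def enn2real_mult)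
qed

lemma meas_le: "measure std_normal_M {..x} = Phi x" by (simp add: Phi_def)
lemma meas_gt: "measure std_normal_M {x<..} = 1 - Phi x"
proof -
  have "{x<..} = UNIV - {..x}" by auto
  then show ?thesis using stdM.prob_compl[of "{..x}"] by (simp add: Phi_def)
qed
lemma meas_Ioc: "x \<le> y \<Longrightarrow> measure std_normal_M {x<..y} = Phi y - Phi x"
proof -
  assume "x \<le> y"
  then have e: "{..y} = {..x} \<union> {x<..y}" by auto
  have "measure std_normal_M ({..x} \<union> {x<..y}) = measure std_normal_M {..x} + measure std_normal_M {x<..y}"
    by (rule stdM.finite_measure_Union) auto
  then have "measure std_normal_M {..y} = measure std_normal_M {..x} + measure std_normal_M {x<..y}"
    by (simp add: e)
  then show ?thesis by (simp add: Phi_def)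
qed

definition wt :: "real \<Rightarrow> real \<Rightarrow> real" where "wt t u = exp (t*u - t\<^sup>2/2)"

lemma wt_pos: "0 < wt t u" by (simp add: wt_def)

lemma wt_meas[measurable]: "wt t \<in> borel_measurable borel" unfolding wt_def by measurable

lemma density_shift_id: "std_normal_density (t + x) * wt t (t + x) = std_normal_density x"
proof -
  have e: "- (t + x)\<^sup>2 / 2 + (t * (t + x) - t\<^sup>2 / 2) = - x\<^sup>2 / 2"
    by (simp add: power2_eq_square field_simps)
  have "exp (- (t + x)\<^sup>2 / 2) * exp (t * (t + x) - t\<^sup>2 / 2) = exp (- x\<^sup>2 / 2)"
    by (simp only: exp_add[symmetric] e)
  then show ?thesis unfolding std_normal_density_def wt_def by simp
qed

lemma shift1: "distr std_normal_M borel (\<lambda>x. t + x) = density std_normal_M (\<lambda>u. ennreal (wt t u))"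
proof (rule measure_eqI)
  fix A assume "A \<in> sets (distr std_normal_M borel (\<lambda>x. t + x))"
  then have A[measurable]: "A \<in> sets borel" by simp
  have "emeasure (density std_normal_M (\<lambda>u. ennreal (wt t u))) A
     = (\<integral>\<^sup>+ u. ennreal (std_normal_density u) * (ennreal (wt t u) * indicator A u) \<partial>lborel)"
    unfolding std_normal_M_def
    by (subst emeasure_density) (auto simp: nn_integral_density)
  also have "\<dots> = (\<integral>\<^sup>+ x. ennreal (std_normal_density (t + 1 * x)) * (ennreal (wt t (t + 1 * x)) * indicator A (t + 1 * x)) \<partial>lborel)"
    by (subst nn_integral_real_affine[where c=1 and t=t]) auto
  also have "\<dots> = (\<integral>\<^sup>+ x. ennreal (std_normal_density x) * indicator ((\<lambda>x. t + x) -` A) x \<partial>lborel)"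
    by (intro nn_integral_cong)
       (simp add: mult.assoc[symmetric] ennreal_mult[symmetric] density_shift_id wt_pos less_imp_le split: split_indicator)
  also have "\<dots> = emeasure (distr std_normal_M borel (\<lambda>x. t + x)) A"
  proof -
    have V: "(\<lambda>x. t + x) -` A \<inter> space borel \<in> sets borel" by (rule measurable_sets[OF _ A]) simp
    show ?thesis
      by (subst emeasure_distr) (use V in \<open>auto simp: std_normal_M_def emeasure_density\<close>)
  qed
  finally show "emeasure (distr std_normal_M borel (\<lambda>x. t + x)) A = emeasure (density std_normal_M (\<lambda>u. ennreal (wt t u))) A" ..
qed simp


lemma shift_fst: "distr Z_M borel (\<lambda>z. (t + fst z, snd z)) = density Z_M (\<lambda>u. ennreal (wt t (fst u)))"
proof -
  have "density Z_M (\<lambda>u. ennreal (wt t (fst u))) = density Z_M (\<lambda>(x,y). ennreal (wt t x) * 1)"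
    by (simp add: case_prod_beta')
  also have "\<dots> = density std_normal_M (\<lambda>u. ennreal (wt t u)) \<Otimes>\<^sub>M density std_normal_M (\<lambda>_. 1)"
    unfolding Z_M_def by (rule pair_measure_density[symmetric]) (auto simp: sf_stdM density_1)
  also have "\<dots> = distr std_normal_M borel (\<lambda>x. t + x) \<Otimes>\<^sub>M distr std_normal_M std_normal_M (\<lambda>x. x)"
    by (simp add: shift1 density_1)
  also have "\<dots> = distr Z_M (borel \<Otimes>\<^sub>M std_normal_M) (\<lambda>(x,y). (t + x, y))"
    unfolding Z_M_def by (rule pair_measure_distr) (auto simp: sf_stdM)
  also have "\<dots> = distr Z_M borel (\<lambda>z. (t + fst z, snd z))"
  proof (rule distr_cong)
    have "sets (borel \<Otimes>\<^sub>M std_normal_M) = sets (borel \<Otimes>\<^sub>M (borel :: real measure))"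
      by (rule sets_pair_measure_cong) simp_all
    then show "sets (borel \<Otimes>\<^sub>M std_normal_M) = sets (borel :: (real \<times> real) measure)" by (metis borel_prod)
  qed (auto simp: case_prod_beta')
  finally show ?thesis ..
qed

lemma shift_snd: "distr Z_M borel (\<lambda>z. (fst z, t + snd z)) = density Z_M (\<lambda>u. ennreal (wt t (snd u)))"
proof -
  have "density Z_M (\<lambda>u. ennreal (wt t (snd u))) = density Z_M (\<lambda>(x,y). 1 * ennreal (wt t y))"
    by (simp add: case_prod_beta')
  also have "\<dots> = density std_normal_M (\<lambda>_. 1) \<Otimes>\<^sub>M density std_normal_M (\<lambda>u. ennreal (wt t u))"
    unfolding Z_M_def
    by (rule pair_measure_density[symmetric])
       (auto simp: sf_stdM shift1[symmetric] intro!: prob_space_imp_sigma_finite stdM.prob_space_distr)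
  also have "\<dots> = distr std_normal_M std_normal_M (\<lambda>x. x) \<Otimes>\<^sub>M distr std_normal_M borel (\<lambda>x. t + x)"
    by (simp add: shift1 density_1)
  also have "\<dots> = distr Z_M (std_normal_M \<Otimes>\<^sub>M borel) (\<lambda>(x,y). (x, t + y))"
    unfolding Z_M_def
    by (rule pair_measure_distr) (auto intro!: prob_space_imp_sigma_finite stdM.prob_space_distr)
  also have "\<dots> = distr Z_M borel (\<lambda>z. (fst z, t + snd z))"
  proof (rule distr_cong)
    have "sets (std_normal_M \<Otimes>\<^sub>M borel) = sets ((borel :: real measure) \<Otimes>\<^sub>M borel)"
      by (rule sets_pair_measure_cong) simp_all
    then show "sets (std_normal_M \<Otimes>\<^sub>M borel) = sets (borel :: (real \<times> real) measure)" by (metis borel_prod)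
  qed (auto simp: case_prod_beta')
  finally show ?thesis ..
qed

lemma emZ1: "emeasure Z_M UNIV = 1" using Z.emeasure_space_1 by simp

lemma T1_meas: "(\<lambda>z::real\<times>real. (t + fst z, snd z)) \<in> measurable Z_M borel"
  unfolding measurable_cong_sets[OF sets_Z refl]
  by (intro borel_measurable_continuous_onI continuous_intros)
lemma T2_meas: "(\<lambda>z::real\<times>real. (fst z, t + snd z)) \<in> measurable Z_M borel"
  unfolding measurable_cong_sets[OF sets_Z refl]
  by (intro borel_measurable_continuous_onI continuous_intros)

lemma Phi_meas[measurable]: "Phi \<in> borel_measurable borel"
  by (rule borel_measurable_mono) (simp add: mono_def Phi_mono)

lemma wfst_meas[measurable]: "(\<lambda>u. wt t (fst u)) \<in> borel_measurable Z_M"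
  unfolding measurable_cong_sets[OF sets_Z refl] wt_def
  by (intro borel_measurable_continuous_onI continuous_intros)
lemma wsnd_meas[measurable]: "(\<lambda>u. wt t (snd u)) \<in> borel_measurable Z_M"
  unfolding measurable_cong_sets[OF sets_Z refl] wt_def
  by (intro borel_measurable_continuous_onI continuous_intros)

lemma int_wfst: "integrable Z_M (\<lambda>u. wt t (fst u))"
proof (rule integrableI_nonneg)
  have "(\<integral>\<^sup>+ x. ennreal (wt t (fst x)) \<partial>Z_M) = emeasure (density Z_M (\<lambda>u. ennreal (wt t (fst u)))) (space Z_M)"
    by (subst emeasure_density) auto
  also have "\<dots> = emeasure (distr Z_M borel (\<lambda>z. (t + fst z, snd z))) (space Z_M)"
    by (simp add: shift_fst)
  also have "\<dots> < \<infinity>"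
    by (subst emeasure_distr) (auto simp: T1_meas T2_meas emZ1)
  finally show "(\<integral>\<^sup>+ x. ennreal (wt t (fst x)) \<partial>Z_M) < \<infinity>" .
qed (auto simp: wt_pos less_imp_le)

lemma int_wsnd: "integrable Z_M (\<lambda>u. wt t (snd u))"
proof (rule integrableI_nonneg)
  have "(\<integral>\<^sup>+ x. ennreal (wt t (snd x)) \<partial>Z_M) = emeasure (density Z_M (\<lambda>u. ennreal (wt t (snd u)))) (space Z_M)"
    by (subst emeasure_density) auto
  also have "\<dots> = emeasure (distr Z_M borel (\<lambda>z. (fst z, t + snd z))) (space Z_M)"
    by (simp add: shift_snd)
  also have "\<dots> < \<infinity>"
    by (subst emeasure_distr) (auto simp: T1_meas T2_meas emZ1)
  finally show "(\<integral>\<^sup>+ x. ennreal (wt t (snd x)) \<partial>Z_M) < \<infinity>" .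
qed (auto simp: wt_pos less_imp_le)

lemma Pr_fst_int: assumes S: "S \<in> sets borel"
  shows "measure Z_M {z. (t + fst z, snd z) \<in> S} = (\<integral>u. indicator S u * wt t (fst u) \<partial>Z_M)"
proof -
  have T: "(\<lambda>z::real\<times>real. (t + fst z, snd z)) \<in> measurable Z_M borel"
    by (rule T1_meas)
  have "measure Z_M {z. (t + fst z, snd z) \<in> S} = measure (distr Z_M borel (\<lambda>z. (t + fst z, snd z))) S"
    by (subst measure_distr[OF T S]) (simp add: vimage_def)
  also have "\<dots> = measure (density Z_M (\<lambda>u. ennreal (wt t (fst u)))) S"
    by (simp add: shift_fst)
  also have "\<dots> = (\<integral>u. indicator S u \<partial>density Z_M (\<lambda>u. ennreal (wt t (fst u))))"
    by simp
  also have "\<dots> = (\<integral>u. wt t (fst u) *\<^sub>R indicator S u \<partial>Z_M)"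
    by (rule integral_density) (auto simp: wt_pos less_imp_le measurable_cong_sets[OF sets_Z refl] S borel_measurable_indicator)
  finally show ?thesis by (simp add: mult.commute)
qed

lemma Pr_snd_int: assumes S: "S \<in> sets borel"
  shows "measure Z_M {z. (fst z, t + snd z) \<in> S} = (\<integral>u. indicator S u * wt t (snd u) \<partial>Z_M)"
proof -
  have T: "(\<lambda>z::real\<times>real. (fst z, t + snd z)) \<in> measurable Z_M borel"
    by (rule T2_meas)
  have "measure Z_M {z. (fst z, t + snd z) \<in> S} = measure (distr Z_M borel (\<lambda>z. (fst z, t + snd z))) S"
    by (subst measure_distr[OF T S]) (simp add: vimage_def)
  also have "\<dots> = measure (density Z_M (\<lambda>u. ennreal (wt t (snd u)))) S"
    by (simp add: shift_snd)
  also have "\<dots> = (\<integral>u. indicator S u \<partial>density Z_M (\<lambda>u. ennreal (wt t (snd u))))"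
    by simp
  also have "\<dots> = (\<integral>u. wt t (snd u) *\<^sub>R indicator S u \<partial>Z_M)"
    by (rule integral_density) (auto simp: wt_pos less_imp_le measurable_cong_sets[OF sets_Z refl] S borel_measurable_indicator)
  finally show ?thesis by (simp add: mult.commute)
qed

lemma hommel_Phi: assumes "Phi a = \<alpha>" "Phi b = \<alpha>/2"
  shows "hommel \<alpha> (Phi x, Phi y) = (x \<le> b \<or> (x \<le> a \<and> y \<le> a), y \<le> b \<or> (x \<le> a \<and> y \<le> a))"
proof -
  have 1: "Phi x \<le> \<alpha>/2 \<longleftrightarrow> x \<le> b" "Phi y \<le> \<alpha>/2 \<longleftrightarrow> y \<le> b"
    using Phi_le_iff[of x b] Phi_le_iff[of y b] assms by simp_all
  have 2: "Phi x \<le> \<alpha> \<longleftrightarrow> x \<le> a" "Phi y \<le> \<alpha> \<longleftrightarrow> y \<le> a"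
    using Phi_le_iff[of x a] Phi_le_iff[of y a] assms by simp_all
  show ?thesis unfolding hommel_def fst_conv snd_conv max.bounded_iff 1 2 by simp
qed

lemma times_borel[intro, simp]: "A \<in> sets (borel::real measure) \<Longrightarrow> B \<in> sets (borel::real measure) \<Longrightarrow> A \<times> B \<in> sets (borel :: (real\<times>real) measure)"
  by (metis borel_prod pair_measureI)

lemma measure_HZ: assumes "b < a" "Phi a = \<alpha>" "Phi b = \<alpha>/2"
  shows "measure Z_M {z. fst z \<le> b \<or> snd z \<le> b \<or> (fst z \<le> a \<and> snd z \<le> a)} = \<alpha>"
proof -
  have e: "{z. fst z \<le> b \<or> snd z \<le> b \<or> (fst z \<le> a \<and> snd z \<le> a)}
     = {..b} \<times> UNIV \<union> ({b<..} \<times> {..b} \<union> {b<..a} \<times> {b<..a})" by auto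
  have m1: "measure Z_M ({b<..} \<times> {..b} \<union> {b<..a} \<times> {b<..a}) = measure Z_M ({b<..} \<times> {..b}) + measure Z_M ({b<..a} \<times> {b<..a})"
    by (rule Z.finite_measure_Union) auto
  have m2: "measure Z_M ({..b} \<times> UNIV \<union> ({b<..} \<times> {..b} \<union> {b<..a} \<times> {b<..a})) = measure Z_M ({..b} \<times> UNIV) + measure Z_M ({b<..} \<times> {..b} \<union> {b<..a} \<times> {b<..a})"
    by (rule Z.finite_measure_Union) auto
  have u: "measure std_normal_M UNIV = 1" using stdM.prob_space by simp
  show ?thesis unfolding e m2 m1 using assms
    by (simp add: measure_Z_Times meas_le meas_gt meas_Ioc u algebra_simps power2_eq_square)
qed

lemma pointwise:
  fixes u1 u2 a b c w1 w2 :: real and s1 s2 :: bool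
  assumes "s1 \<Longrightarrow> u1 \<le> a" "s2 \<Longrightarrow> u2 \<le> a" "b < a" "0 < c"
    "u1 \<le> b \<Longrightarrow> c \<le> w1" "u2 \<le> b \<Longrightarrow> c \<le> w2" "b < u1 \<Longrightarrow> w1 \<le> c" "b < u2 \<Longrightarrow> w2 \<le> c"
    "u1 \<le> a \<Longrightarrow> u2 \<le> a \<Longrightarrow> c \<le> w1 + w2" "0 < w1" "0 < w2"
  shows "(if s1 then w1 else 0) + (if s2 then w2 else 0) \<le>
     (if u1 \<le> b \<or> (u1 \<le> a \<and> u2 \<le> a) then w1 else 0) + (if u2 \<le> b \<or> (u1 \<le> a \<and> u2 \<le> a) then w2 else 0)
      + c * ((if s1 \<or> s2 then 1 else 0) - (if (u1 \<le> b \<or> (u1 \<le> a \<and> u2 \<le> a)) \<or> (u2 \<le> b \<or> (u1 \<le> a \<and> u2 \<le> a)) then 1 else 0))"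
  using assms by (cases s1; cases s2; cases "u1 \<le> b"; cases "u2 \<le> b"; cases "u1 \<le> a"; cases "u2 \<le> a"; simp; linarith?)

lemma integrate_step:
  fixes S1 S2 R H1 H2 HR :: "(real \<times> real) set"
  assumes m: "S1 \<in> sets borel" "S2 \<in> sets borel" "R \<in> sets borel" "H1 \<in> sets borel" "H2 \<in> sets borel" "HR \<in> sets borel"
  and pw: "\<And>u. indicator S1 u * wt t (fst u) + indicator S2 u * wt t (snd u) \<le>
      indicator H1 u * wt t (fst u) + indicator H2 u * wt t (snd u) + c * (indicator R u - indicator HR u)"
  shows "(\<integral>u. indicator S1 u * wt t (fst u) \<partial>Z_M) + (\<integral>u. indicator S2 u * wt t (snd u) \<partial>Z_M)
     \<le> (\<integral>u. indicator H1 u * wt t (fst u) \<partial>Z_M) + (\<integral>u. indicator H2 u * wt t (snd u) \<partial>Z_M)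
        + c * (measure Z_M R - measure Z_M HR)"
proof -
  have ms: "S1 \<in> sets Z_M" "S2 \<in> sets Z_M" "R \<in> sets Z_M" "H1 \<in> sets Z_M" "H2 \<in> sets Z_M" "HR \<in> sets Z_M"
    using m by simp_all
  have i1: "integrable Z_M (\<lambda>u. indicator A u * wt t (fst u))" if "A \<in> sets Z_M" for A
    using integrable_real_mult_indicator[OF that int_wfst[of t]] by (simp add: mult.commute)
  have i2: "integrable Z_M (\<lambda>u. indicator A u * wt t (snd u))" if "A \<in> sets Z_M" for A
    using integrable_real_mult_indicator[OF that int_wsnd[of t]] by (simp add: mult.commute)
  have i3: "integrable Z_M (indicator A :: _ \<Rightarrow> real)" if "A \<in> sets Z_M" for A
    using that by (intro integrable_real_indicator) (auto simp: Z.emeasure_finite less_top[symmetric])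
  have "(\<integral>u. indicator S1 u * wt t (fst u) + indicator S2 u * wt t (snd u) \<partial>Z_M) \<le>
        (\<integral>u. indicator H1 u * wt t (fst u) + indicator H2 u * wt t (snd u) + c * (indicator R u - indicator HR u) \<partial>Z_M)"
    by (intro integral_mono pw) (intro Bochner_Integration.integrable_add Bochner_Integration.integrable_diff integrable_mult_right i1 i2 i3 ms)+
  also have "\<dots> = (\<integral>u. indicator H1 u * wt t (fst u) \<partial>Z_M) + (\<integral>u. indicator H2 u * wt t (snd u) \<partial>Z_M)
        + c * ((\<integral>u. indicator R u \<partial>Z_M) - (\<integral>u. indicator HR u \<partial>Z_M))"
  proof -
    have a: "integrable Z_M (\<lambda>u. indicator H1 u * wt t (fst u) + indicator H2 u * wt t (snd u))"
      by (intro Bochner_Integration.integrable_add i1 i2 ms)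
    have b: "integrable Z_M (\<lambda>u. c * (indicator R u - indicator HR u) :: real)"
      by (intro integrable_mult_right Bochner_Integration.integrable_diff i3 ms)
    have "(\<integral>u. indicator H1 u * wt t (fst u) + indicator H2 u * wt t (snd u) + c * (indicator R u - indicator HR u) \<partial>Z_M)
      = (\<integral>u. indicator H1 u * wt t (fst u) + indicator H2 u * wt t (snd u) \<partial>Z_M) + (\<integral>u. c * (indicator R u - indicator HR u) \<partial>Z_M)"
      by (rule Bochner_Integration.integral_add[OF a b])
    also have "(\<integral>u. indicator H1 u * wt t (fst u) + indicator H2 u * wt t (snd u) \<partial>Z_M)
       = (\<integral>u. indicator H1 u * wt t (fst u) \<partial>Z_M) + (\<integral>u. indicator H2 u * wt t (snd u) \<partial>Z_M)"
      by (rule Bochner_Integration.integral_add[OF i1 i2]) (rule ms)+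
    also have "(\<integral>u. c * (indicator R u - indicator HR u) \<partial>Z_M) = c * ((\<integral>u. indicator R u \<partial>Z_M) - (\<integral>u. indicator HR u \<partial>Z_M))"
      by (simp only: Bochner_Integration.integral_mult_right_zero Bochner_Integration.integral_diff[OF i3 i3, OF ms(3) ms(6)])
    finally show ?thesis .
  qed
  also have "(\<integral>u. indicator R u \<partial>Z_M) = measure Z_M R"
    using Bochner_Integration.integral_indicator[of Z_M R] by simp
  also have "(\<integral>u. indicator HR u \<partial>Z_M) = measure Z_M HR"
    using Bochner_Integration.integral_indicator[of Z_M HR] by simp
  finally show ?thesis
    by (simp only: Bochner_Integration.integral_add[OF i1 i2, OF ms(1) ms(2)])
qed

lemma borel2: "sets (borel::(real\<times>real) measure) = sets (borel \<Otimes>\<^sub>M (borel::real measure))"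
  by (metis borel_prod)

lemma borelP_sets: "{u::real\<times>real. P (fst u) (snd u)} \<in> sets borel \<longleftrightarrow> {u. P (fst u) (snd u)} \<in> sets (borel \<Otimes>\<^sub>M (borel::real measure))"
  by (simp only: borel2)

lemma Pr_eq: "Pr t1 t2 E = measure Z_M {z. E (Phi (t1 + fst z), Phi (t2 + snd z))}"
  by (simp add: Pr_def pvals_def)

theorem mainTheorem4:
  fixes \<alpha> \<theta> :: real
  assumes "0 < \<alpha>" and "\<alpha> < 1 / 2"
    and "\<theta> < 0"
    and "\<theta> > - ln 2 / (Phi_inv \<alpha> - Phi_inv (\<alpha> / 2))"
  shows "is_procedure (hommel \<alpha>) \<and> strong_FWER \<alpha> (hommel \<alpha>) \<and> marg_nominal \<alpha> (hommel \<alpha>) \<and>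
         (\<forall>D. is_procedure D \<and> marg_nominal \<alpha> D \<and> strong_FWER \<alpha> D
              \<longrightarrow> Pi1 \<theta> D \<le> Pi1 \<theta> (hommel \<alpha>))"
proof -
  define a where "a = Phi_inv \<alpha>"
  define b where "b = Phi_inv (\<alpha> / 2)"
  have Pa: "Phi a = \<alpha>" unfolding a_def using assms(1,2) by (intro Phi_inv) auto
  have Pb: "Phi b = \<alpha>/2" unfolding b_def using assms(1,2) by (intro Phi_inv) auto
  have ba: "b < a" using Pa Pb Phi_le_iff[of a b] assms(1) by auto
  have hP: "\<And>x y. hommel \<alpha> (Phi x, Phi y) = (x \<le> b \<or> (x \<le> a \<and> y \<le> a), y \<le> b \<or> (x \<le> a \<and> y \<le> a))"
    by (rule hommel_Phi[OF Pa Pb])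
  define HZ where "HZ = {z::real\<times>real. fst z \<le> b \<or> snd z \<le> b \<or> (fst z \<le> a \<and> snd z \<le> a)}"
  have mHZ: "measure Z_M HZ = \<alpha>" unfolding HZ_def by (rule measure_HZ[OF ba Pa Pb])
  have HZm: "HZ \<in> sets borel" 
  proof -
    have "HZ = {..b} \<times> UNIV \<union> UNIV \<times> {..b} \<union> {..a} \<times> {..a}" unfolding HZ_def by auto
    then show ?thesis by (simp only:) (intro sets.Un times_borel; simp)
  qed

  have proc: "is_procedure (hommel \<alpha>)"
  proof -
    have "hommel \<alpha> \<in> measurable (borel \<Otimes>\<^sub>M borel) (count_space UNIV \<Otimes>\<^sub>M count_space UNIV)"
      unfolding hommel_def by measurable
    then have "hommel \<alpha> \<in> measurable borel (count_space UNIV)"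
    proof -
      have eq: "count_space UNIV \<Otimes>\<^sub>M count_space UNIV = count_space (UNIV :: (bool\<times>bool) set)"
        using pair_measure_countable[of "UNIV::bool set" "UNIV::bool set"] by simp
      assume "hommel \<alpha> \<in> measurable (borel \<Otimes>\<^sub>M borel) (count_space UNIV \<Otimes>\<^sub>M count_space UNIV)"
      then show ?thesis unfolding eq measurable_cong_sets[OF borel2 refl] .
    qed
    then show ?thesis unfolding is_procedure_def by (rule measurable_restrict_space1)
  qed

  have marg: "marg_nominal \<alpha> (hommel \<alpha>)"
    unfolding marg_nominal_def hommel_def using assms(1) by auto

  have fwer: "strong_FWER \<alpha> (hommel \<alpha>)"
    unfolding strong_FWER_def
  proof (intro allI)
    fix t1 t2 :: real
    define ev where "ev = {z::real\<times>real. (0 \<le> t1 \<and> (t1 + fst z \<le> b \<or> (t1 + fst z \<le> a \<and> t2 + snd z \<le> a)))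
         \<or> (0 \<le> t2 \<and> (t2 + snd z \<le> b \<or> (t1 + fst z \<le> a \<and> t2 + snd z \<le> a)))}"
    have "Pr t1 t2 (\<lambda>p. (0 \<le> t1 \<and> fst (hommel \<alpha> p)) \<or> (0 \<le> t2 \<and> snd (hommel \<alpha> p))) = measure Z_M ev"
      unfolding Pr_eq hP ev_def by simp
    also have "\<dots> \<le> \<alpha>"
    proof (cases "0 \<le> t1"; cases "0 \<le> t2")
      assume "0 \<le> t1" "0 \<le> t2"
      then have "ev \<subseteq> HZ" unfolding ev_def HZ_def by auto
      then show ?thesis using Z.finite_measure_mono[of ev HZ] HZm mHZ by simp
    next
      assume "0 \<le> t1" "\<not> 0 \<le> t2"
      then have "ev \<subseteq> {..a} \<times> UNIV" unfolding ev_def using ba by auto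
      moreover have "measure Z_M ({..a} \<times> UNIV) = \<alpha>"
        using measure_Z_Times[of "{..a}" UNIV] stdM.prob_space by (simp add: meas_le Pa)
      ultimately show ?thesis using Z.finite_measure_mono[of ev "{..a} \<times> UNIV"] by simp
    next
      assume "\<not> 0 \<le> t1" "0 \<le> t2"
      then have "ev \<subseteq> UNIV \<times> {..a}" unfolding ev_def using ba by auto
      moreover have "measure Z_M (UNIV \<times> {..a}) = \<alpha>"
        using measure_Z_Times[of UNIV "{..a}"] stdM.prob_space by (simp add: meas_le Pa)
      ultimately show ?thesis using Z.finite_measure_mono[of ev "UNIV \<times> {..a}"] by simp
    next
      assume "\<not> 0 \<le> t1" "\<not> 0 \<le> t2"
      then have "ev = {}" unfolding ev_def by auto
      then show ?thesis using assms(1) by simp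
    qed
    finally show "Pr t1 t2 (\<lambda>p. (0 \<le> t1 \<and> fst (hommel \<alpha> p)) \<or> (0 \<le> t2 \<and> snd (hommel \<alpha> p))) \<le> \<alpha>" .
  qed

  define c where "c = wt \<theta> b"
  have cpos: "0 < c" unfolding c_def by (rule wt_pos)
  have wmono: "wt \<theta> y \<le> wt \<theta> x" if "x \<le> y" for x y
  proof -
    have "\<theta> * y \<le> \<theta> * x" using that assms(3) by (simp add: mult_left_mono_neg)
    then show ?thesis unfolding wt_def by simp
  qed
  have two: "c \<le> 2 * wt \<theta> a"
  proof -
    have h: "- ln 2 / (a - b) < \<theta>" using assms(4) unfolding a_def b_def .
    have ab: "0 < a - b" using ba by simp
    have "(- ln 2 / (a - b)) * (a - b) < \<theta> * (a - b)" by (rule mult_strict_right_mono[OF h ab])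
    then have "-ln 2 < \<theta> * (a - b)" using ab by simp
    then have "\<theta> * b - \<theta>\<^sup>2/2 \<le> ln 2 + (\<theta> * a - \<theta>\<^sup>2/2)" by (simp add: algebra_simps)
    then have "exp (\<theta> * b - \<theta>\<^sup>2/2) \<le> exp (ln 2 + (\<theta> * a - \<theta>\<^sup>2/2))" by simp
    then show ?thesis unfolding c_def wt_def by (simp add: exp_add)
  qed

  have opt: "Pi1 \<theta> D \<le> Pi1 \<theta> (hommel \<alpha>)"
    if D: "is_procedure D" "marg_nominal \<alpha> D" "strong_FWER \<alpha> D" for D
  proof -
    define P where "P = (\<lambda>u::real\<times>real. (Phi (fst u), Phi (snd u)))"
    have Pb1: "(\<lambda>u::real\<times>real. (Phi (fst u), Phi (snd u))) \<in> measurable (borel \<Otimes>\<^sub>M borel) (borel \<Otimes>\<^sub>M borel)"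
      by measurable
    have Pm: "P \<in> measurable borel (restrict_space borel ({0..1} \<times> {0..1}))"
      unfolding P_def
      by (rule measurable_restrict_space2) (use Pb1 in \<open>auto simp: measurable_cong_sets[OF borel2 borel2] Phi_nonneg Phi_le1\<close>)
    have Dm: "D \<in> measurable (restrict_space borel ({0..1} \<times> {0..1})) (count_space UNIV)"
      using D(1) unfolding is_procedure_def .
    have DP: "(\<lambda>u. D (P u)) \<in> measurable borel (count_space UNIV)"
      by (rule measurable_compose[OF Pm Dm])
    have fm: "(\<lambda>u. fst (D (P u))) \<in> measurable borel (count_space UNIV)"
      by (rule measurable_compose[OF DP measurable_count_space])
    have sm: "(\<lambda>u. snd (D (P u))) \<in> measurable borel (count_space UNIV)"
      by (rule measurable_compose[OF DP measurable_count_space])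
    define S1 where "S1 = {u. fst (D (P u))}"
    define S2 where "S2 = {u. snd (D (P u))}"
    define R where "R = {u. fst (D (P u)) \<or> snd (D (P u))}"
    define H1 where "H1 = {u::real\<times>real. fst u \<le> b \<or> (fst u \<le> a \<and> snd u \<le> a)}"
    define H2 where "H2 = {u::real\<times>real. snd u \<le> b \<or> (fst u \<le> a \<and> snd u \<le> a)}"
    have S1m: "S1 \<in> sets borel" using fm unfolding S1_def pred_def by simp
    have S2m: "S2 \<in> sets borel" using sm unfolding S2_def pred_def by simp
    have RU: "R = S1 \<union> S2" unfolding R_def S1_def S2_def by auto
    have Rm: "R \<in> sets borel" unfolding RU using S1m S2m by (rule sets.Un)
    have H1m: "H1 \<in> sets borel" 
    proof -
      have "H1 = {..b} \<times> UNIV \<union> {..a} \<times> {..a}" unfolding H1_def by auto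
      then show ?thesis by (simp only:) (intro sets.Un times_borel; simp)
    qed
    have H2m: "H2 \<in> sets borel" 
    proof -
      have "H2 = UNIV \<times> {..b} \<union> {..a} \<times> {..a}" unfolding H2_def by auto
      then show ?thesis by (simp only:) (intro sets.Un times_borel; simp)
    qed
    have HR: "H1 \<union> H2 = HZ" unfolding H1_def H2_def HZ_def by auto

    have e1: "Pr \<theta> 0 (\<lambda>p. fst (D p)) = (\<integral>u. indicator S1 u * wt \<theta> (fst u) \<partial>Z_M)"
      unfolding Pr_eq using Pr_fst_int[OF S1m, of \<theta>] by (simp add: S1_def P_def)
    have e2: "Pr 0 \<theta> (\<lambda>p. snd (D p)) = (\<integral>u. indicator S2 u * wt \<theta> (snd u) \<partial>Z_M)"
      unfolding Pr_eq using Pr_snd_int[OF S2m, of \<theta>] by (simp add: S2_def P_def)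
    have f1: "Pr \<theta> 0 (\<lambda>p. fst (hommel \<alpha> p)) = (\<integral>u. indicator H1 u * wt \<theta> (fst u) \<partial>Z_M)"
      unfolding Pr_eq hP using Pr_fst_int[OF H1m, of \<theta>] by (simp add: H1_def)
    have f2: "Pr 0 \<theta> (\<lambda>p. snd (hommel \<alpha> p)) = (\<integral>u. indicator H2 u * wt \<theta> (snd u) \<partial>Z_M)"
      unfolding Pr_eq hP using Pr_snd_int[OF H2m, of \<theta>] by (simp add: H2_def)
    have mR: "measure Z_M R \<le> \<alpha>"
    proof -
      have "Pr 0 0 (\<lambda>p. (0 \<le> (0::real) \<and> fst (D p)) \<or> (0 \<le> (0::real) \<and> snd (D p))) \<le> \<alpha>"
        using D(3) unfolding strong_FWER_def by blast
      then show ?thesis unfolding Pr_eq by (simp add: R_def P_def)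
    qed
    have nomS: "fst u \<le> a" if "u \<in> S1" for u
    proof (rule ccontr)
      assume "\<not> fst u \<le> a"
      then have "Phi (fst u) > \<alpha>" using Phi_le_iff[of "fst u" a] Pa by simp
      then have "\<not> fst (D (P u))" using D(2) unfolding marg_nominal_def P_def
        by (simp add: Phi_nonneg Phi_le1)
      then show False using that unfolding S1_def by simp
    qed
    have nomS2: "snd u \<le> a" if "u \<in> S2" for u
    proof (rule ccontr)
      assume "\<not> snd u \<le> a"
      then have "Phi (snd u) > \<alpha>" using Phi_le_iff[of "snd u" a] Pa by simp
      then have "\<not> snd (D (P u))" using D(2) unfolding marg_nominal_def P_def
        by (simp add: Phi_nonneg Phi_le1)
      then show False using that unfolding S2_def by simp
    qed
    have pw: "indicator S1 u * wt \<theta> (fst u) + indicator S2 u * wt \<theta> (snd u) \<le>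
      indicator H1 u * wt \<theta> (fst u) + indicator H2 u * wt \<theta> (snd u) + c * (indicator R u - indicator HZ u)" for u
    proof -
      have RR: "(u \<in> R) = (u \<in> S1 \<or> u \<in> S2)" unfolding R_def S1_def S2_def by simp
      have w1: "fst u \<le> b \<Longrightarrow> c \<le> wt \<theta> (fst u)" "b < fst u \<Longrightarrow> wt \<theta> (fst u) \<le> c"
        unfolding c_def using wmono by auto
      have w2: "snd u \<le> b \<Longrightarrow> c \<le> wt \<theta> (snd u)" "b < snd u \<Longrightarrow> wt \<theta> (snd u) \<le> c"
        unfolding c_def using wmono by auto
      have w3: "fst u \<le> a \<Longrightarrow> snd u \<le> a \<Longrightarrow> c \<le> wt \<theta> (fst u) + wt \<theta> (snd u)"
        using two wmono[of "fst u" a] wmono[of "snd u" a] by linarith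
      have "(if u \<in> S1 then wt \<theta> (fst u) else 0) + (if u \<in> S2 then wt \<theta> (snd u) else 0) \<le>
         (if fst u \<le> b \<or> (fst u \<le> a \<and> snd u \<le> a) then wt \<theta> (fst u) else 0) + (if snd u \<le> b \<or> (fst u \<le> a \<and> snd u \<le> a) then wt \<theta> (snd u) else 0)
         + c * ((if u \<in> S1 \<or> u \<in> S2 then 1 else 0) - (if (fst u \<le> b \<or> (fst u \<le> a \<and> snd u \<le> a)) \<or> (snd u \<le> b \<or> (fst u \<le> a \<and> snd u \<le> a)) then 1 else 0))"
        by (rule pointwise[OF nomS nomS2 ba cpos w1(1) w2(1) w1(2) w2(2) w3 wt_pos wt_pos])
      then show ?thesis unfolding indicator_def RR H1_def H2_def HZ_def by auto
    qed
    have main: "(\<integral>u. indicator S1 u * wt \<theta> (fst u) \<partial>Z_M) + (\<integral>u. indicator S2 u * wt \<theta> (snd u) \<partial>Z_M)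
     \<le> (\<integral>u. indicator H1 u * wt \<theta> (fst u) \<partial>Z_M) + (\<integral>u. indicator H2 u * wt \<theta> (snd u) \<partial>Z_M)
        + c * (measure Z_M R - measure Z_M HZ)"
      by (rule integrate_step[OF S1m S2m Rm H1m H2m HZm pw])
    have "c * (measure Z_M R - measure Z_M HZ) \<le> 0"
      using mR mHZ cpos by (simp add: mult_nonneg_nonpos)
    then have "(\<integral>u. indicator S1 u * wt \<theta> (fst u) \<partial>Z_M) + (\<integral>u. indicator S2 u * wt \<theta> (snd u) \<partial>Z_M)
     \<le> (\<integral>u. indicator H1 u * wt \<theta> (fst u) \<partial>Z_M) + (\<integral>u. indicator H2 u * wt \<theta> (snd u) \<partial>Z_M)"
      using main by linarith
    then show ?thesis unfolding Pi1_def e1 e2 f1 f2 by (rule divide_right_mono) simp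
  qed
  show ?thesis using proc fwer marg opt by blast
qed

end
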